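(* In the setting below, assume $\|\nabla f_i(x)\|\le G_i$ for all $x$ and $i$, and that $\psi$ satisfies the $\mu_\psi$-condition with $\mu_\psi>0$. For any $m\in\mathbb N$, with stepsizes $\eta_k=\frac{m}{n\mu_\psi k}$ for $k\in[K]$ and arbitrary permutations $\sigma_k$, there is an absolute constant $C>0$ such that $$F(x_{K+1})-F_*\le C\left(\frac{\mu_\psi D^2}{\binom{K+m}{m}}+\frac{\bar G^2m\log K}{\mu_\psi K}\right).$$
   Context: Setting. Let $n,d\in\mathbb N$, let $f_1,\dots,f_n:\mathbb R^d\to\mathbb R$ be convex, $f=\frac1n\sum_{i=1}^nf_i$, let $\psi:\mathbb R^d\to\mathbb R\cup\{+\infty\}$ be proper, closed and convex, and $F=f+\psi$. For a convex function $g$, $\nabla g(x)$ denotes an element of $\partial g(x)$ (for each $f_i$ a fixed selection of subgradients, the same one used in the algorithm), and $B_g(x,y)=g(x)-g(y)-\langle\nabla g(y),x-y\rangle$. The $\mu_\psi$-condition: $\mu_\psi\ge0$ and $B_\psi(x,y)\ge\frac{\mu_\psi}{2}\|x-y\|^2$ for all $x,y$ with $\partial\psi(y)\neq\emptyset$ and every choice of $\nabla\psi(y)\in\partial\psi(y)$. Assume there is $x_*\in\mathbb R^d$ with $F(x_* )=\inf_{x}F(x)\in\mathbb R$; write $F_*=F(x_* )$. Proximal shuffling gradient method: given $x_1\in\mathrm{dom}\,\psi$, a number of epochs $K\ge2$ and stepsizes $\eta_k>0$, for $k=1,\dots,K$: choose a permutation $\sigma_k=(\sigma_k^1,\dots,\sigma_k^n)$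 of $[n]=\{1,\dots,n\}$; set $x_k^1=x_k$ and $x_k^{i+1}=x_k^i-\eta_k\nabla f_{\sigma_k^i}(x_k^i)$ for $i=1,\dots,n$; set $x_{k+1}=\arg\min_{x\in\mathbb R^d}\{n\psi(x)+\frac{1}{2\eta_k}\|x-x_k^{n+1}\|^2\}$. $D=\|x_*-x_1\|$; $\|\cdot\|$ is the Euclidean norm; $\log$ is natural. Lipschitz condition: constants $G_i>0$ with $\|\nabla f_i(x)\|\le G_i$ for all $x\in\mathbb R^d$, $i\in[n]$ (for every subgradient); $\bar G=\frac1n\sum_{i=1}^nG_i$. *)

theory Defs
  imports Complex_Main
begin

text \<open>Euclidean space R^d is represented explicitly (so that the constant C can be
stated independently of the dimension d) as the functions nat => real vanishing
at all coordinates >= d, with the standard inner product and Euclidean norm.\<close>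

definition vec :: "nat \<Rightarrow> (nat \<Rightarrow> real) set" where
  "vec d = {x. \<forall>i\<ge>d. x i = 0}"

definition ip :: "nat \<Rightarrow> (nat \<Rightarrow> real) \<Rightarrow> (nat \<Rightarrow> real) \<Rightarrow> real" where
  "ip d x y = (\<Sum>i<d. x i * y i)"

definition nrm :: "nat \<Rightarrow> (nat \<Rightarrow> real) \<Rightarrow> real" where
  "nrm d x = sqrt (ip d x x)"

definition vdiff :: "(nat \<Rightarrow> real) \<Rightarrow> (nat \<Rightarrow> real) \<Rightarrow> (nat \<Rightarrow> real)" where
  "vdiff x y = (\<lambda>i. x i - y i)"

definition vcomb :: "real \<Rightarrow> (nat \<Rightarrow> real) \<Rightarrow> real \<Rightarrow> (nat \<Rightarrow> real) \<Rightarrow> (nat \<Rightarrow> real)" where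
  "vcomb a x b y = (\<lambda>i. a * x i + b * y i)"

definition convex_set :: "nat \<Rightarrow> (nat \<Rightarrow> real) set \<Rightarrow> bool" where
  "convex_set d S \<longleftrightarrow> S \<subseteq> vec d \<and>
     (\<forall>x\<in>S. \<forall>y\<in>S. \<forall>t\<in>{0..1}. vcomb (1 - t) x t y \<in> S)"

definition convex_fun_on :: "(nat \<Rightarrow> real) set \<Rightarrow> ((nat \<Rightarrow> real) \<Rightarrow> real) \<Rightarrow> bool" where
  "convex_fun_on S h \<longleftrightarrow>
     (\<forall>x\<in>S. \<forall>y\<in>S. \<forall>t\<in>{0..1}. h (vcomb (1 - t) x t y) \<le> (1 - t) * h x + t * h y)"

text \<open>Subdifferential at y of the extended-valued function that equals h on S and
+infinity outside S (empty if y is not in S).\<close>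
definition subgrad :: "nat \<Rightarrow> (nat \<Rightarrow> real) set \<Rightarrow> ((nat \<Rightarrow> real) \<Rightarrow> real) \<Rightarrow> (nat \<Rightarrow> real)
    \<Rightarrow> (nat \<Rightarrow> real) set" where
  "subgrad d S h y = {g. y \<in> S \<and> g \<in> vec d \<and> (\<forall>x\<in>S. h y + ip d g (vdiff x y) \<le> h x)}"

text \<open>Closedness (lower semicontinuity = closed epigraph) of the extended-valued function
equal to h on S and +infinity outside S.\<close>
definition closed_fun :: "nat \<Rightarrow> (nat \<Rightarrow> real) set \<Rightarrow> ((nat \<Rightarrow> real) \<Rightarrow> real) \<Rightarrow> bool" where
  "closed_fun d S h \<longleftrightarrow>
     (\<forall>xs ts x t. (\<forall>j. xs j \<in> S \<and> h (xs j) \<le> ts j) \<and> x \<in> vec d \<and>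
        (\<lambda>j. nrm d (vdiff (xs j) x)) \<longlonglongrightarrow> 0 \<and> ts \<longlonglongrightarrow> t
        \<longrightarrow> x \<in> S \<and> h x \<le> t)"

text \<open>psi : R^d -> R \<union> {+inf} proper, closed, convex; represented by its effective
domain S = dom psi and its (real) values on S.\<close>
definition proper_closed_convex :: "nat \<Rightarrow> (nat \<Rightarrow> real) set \<Rightarrow> ((nat \<Rightarrow> real) \<Rightarrow> real) \<Rightarrow> bool" where
  "proper_closed_convex d S h \<longleftrightarrow> S \<noteq> {} \<and> convex_set d S \<and> convex_fun_on S h \<and> closed_fun d S h"

text \<open>The mu_psi-condition: B_psi(x,y) \<ge> mu/2 ||x-y||^2 for every y with nonempty
subdifferential and every subgradient at y (trivial when x is outside dom psi).\<close>
definition mu_condition :: "nat \<Rightarrow> (nat \<Rightarrow> real) set \<Rightarrow> ((nat \<Rightarrow> real) \<Rightarrow> real) \<Rightarrow> real \<Rightarrow> bool" where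
  "mu_condition d S h mu \<longleftrightarrow> mu \<ge> 0 \<and>
     (\<forall>x\<in>S. \<forall>y. \<forall>g\<in>subgrad d S h y.
        h x - h y - ip d g (vdiff x y) \<ge> mu / 2 * (nrm d (vdiff x y))\<^sup>2)"

text \<open>The proximal step is
characterised as a minimiser over dom psi (points outside have objective +inf).\<close>
definition prox_shuffling_run ::
  "nat \<Rightarrow> nat \<Rightarrow> (nat \<Rightarrow> (nat \<Rightarrow> real) \<Rightarrow> (nat \<Rightarrow> real)) \<Rightarrow> (nat \<Rightarrow> real) set
   \<Rightarrow> ((nat \<Rightarrow> real) \<Rightarrow> real) \<Rightarrow> nat \<Rightarrow> (nat \<Rightarrow> real) \<Rightarrow> (nat \<Rightarrow> nat \<Rightarrow> nat)
   \<Rightarrow> (nat \<Rightarrow> (nat \<Rightarrow> real)) \<Rightarrow> (nat \<Rightarrow> nat \<Rightarrow> (nat \<Rightarrow> real)) \<Rightarrow> bool" where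
  "prox_shuffling_run d n gf S psi K eta sigma xs xin \<longleftrightarrow>
     xs 1 \<in> S \<and>
     (\<forall>k\<in>{1..K}.
        bij_betw (sigma k) {1..n} {1..n} \<and>
        xin k 1 = xs k \<and>
        (\<forall>i\<in>{1..n}. xin k (Suc i) = vcomb 1 (xin k i) (- eta k) (gf (sigma k i) (xin k i))) \<and>
        xs (Suc k) \<in> S \<and>
        (\<forall>y\<in>S. real n * psi (xs (Suc k)) + 1 / (2 * eta k) * (nrm d (vdiff (xs (Suc k)) (xin k (Suc n))))\<^sup>2
                 \<le> real n * psi y + 1 / (2 * eta k) * (nrm d (vdiff y (xin k (Suc n))))\<^sup>2))"

end

theory Submission
  imports Defs "HOL-Analysis.L2_Norm"
begin


lemma nrm_L2: "nrm d x = L2_set x {..<d}"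
  unfolding nrm_def ip_def L2_set_def by (simp add: power2_eq_square)

lemma ip_sym: "ip d x y = ip d y x"
  unfolding ip_def by (simp add: mult.commute)

lemma ip_self_nonneg: "ip d x x \<ge> 0"
  unfolding ip_def by (simp add: sum_nonneg)

lemma nrm_sq: "(nrm d x)\<^sup>2 = ip d x x"
  unfolding nrm_def using ip_self_nonneg by simp

lemma nrm_nonneg: "nrm d x \<ge> 0"
  unfolding nrm_def using ip_self_nonneg by simp

lemma ip_le: "ip d x y \<le> nrm d x * nrm d y"
proof -
  have "ip d x y \<le> (\<Sum>i<d. \<bar>x i\<bar> * \<bar>y i\<bar>)"
    unfolding ip_def by (rule sum_mono) (simp add: abs_mult[symmetric])
  also have "\<dots> \<le> nrm d x * nrm d y" unfolding nrm_L2 by (rule L2_set_mult_ineq)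
  finally show ?thesis .
qed

lemma nrm_add: "nrm d (\<lambda>l. x l + y l) \<le> nrm d x + nrm d y"
  unfolding nrm_L2 by (rule L2_set_triangle_ineq)

lemma nrm_scale: "nrm d (\<lambda>l. c * x l) = \<bar>c\<bar> * nrm d x"
  unfolding nrm_L2 L2_set_def
  by (simp add: power_mult_distrib real_sqrt_mult flip: sum_distrib_left)

lemma nrm_neg: "nrm d (\<lambda>l. - x l) = nrm d x"
  using nrm_scale[of d "-1" x] by simp

lemma nrm_vdiff_sym: "nrm d (vdiff x y) = nrm d (vdiff y x)"
  using nrm_neg[of d "vdiff x y"] unfolding vdiff_def by simp

lemma nrm_sum: "finite J \<Longrightarrow> nrm d (\<lambda>l. \<Sum>j\<in>J. g j l) \<le> (\<Sum>j\<in>J. nrm d (g j))"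
proof (induction J rule: finite_induct)
  case empty
  then show ?case by (simp add: nrm_def ip_def)
next
  case (insert a J)
  have "nrm d (\<lambda>l. \<Sum>j\<in>insert a J. g j l) = nrm d (\<lambda>l. g a l + (\<Sum>j\<in>J. g j l))"
    using insert by simp
  also have "\<dots> \<le> nrm d (g a) + nrm d (\<lambda>l. \<Sum>j\<in>J. g j l)" by (rule nrm_add)
  also have "\<dots> \<le> nrm d (g a) + (\<Sum>j\<in>J. nrm d (g j))" using insert by simp
  finally show ?case using insert by simp
qed

lemma ip_sum_left: "ip d (\<lambda>l. \<Sum>j\<in>J. g j l) w = (\<Sum>j\<in>J. ip d (g j) w)"
  unfolding ip_def by (simp add: sum_distrib_right sum.swap[of _ J])

lemma ip_scale_left: "ip d (\<lambda>l. c * x l) w = c * ip d x w"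
  unfolding ip_def by (simp add: sum_distrib_left mult.assoc)

lemma ip_diff_left: "ip d (vdiff x y) w = ip d x w - ip d y w"
  unfolding ip_def vdiff_def by (simp add: left_diff_distrib sum_subtractf)

lemma ip_diff_right: "ip d w (vdiff x y) = ip d w x - ip d w y"
  unfolding ip_def vdiff_def by (simp add: right_diff_distrib sum_subtractf)

lemma four_point:
  "ip d (vdiff a z) (vdiff a y) + ip d (vdiff c z) (vdiff y c) =
   ip d (vdiff a y) (vdiff a y)/2 - ip d (vdiff c y) (vdiff c y)/2
   + ip d (vdiff a z) (vdiff a z)/2 - ip d (vdiff z c) (vdiff z c)/2"
  unfolding ip_diff_left ip_diff_right
  by (simp add: field_simps ip_sym[of d z a] ip_sym[of d y a] ip_sym[of d c a] ip_sym[of d y z] ip_sym[of d c z] ip_sym[of d c y])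

lemma sq_expand:
  "ip d (\<lambda>l. u l + t * v l) (\<lambda>l. u l + t * v l) = ip d u u + 2 * t * ip d u v + t\<^sup>2 * ip d v v"
proof -
  have e: "\<And>l. (u l + t * v l) * (u l + t * v l) = u l * u l + 2 * t * (u l * v l) + t\<^sup>2 * (v l * v l)"
    by (simp add: algebra_simps power2_eq_square)
  show ?thesis unfolding ip_def e by (simp add: sum.distrib sum_distrib_left)
qed

lemma vec_closed_ip: "y \<in> vec d \<Longrightarrow> True" by simp



lemma ip_neg_left: "ip d (\<lambda>l. - x l) y = - ip d x y"
  unfolding ip_def by (simp add: sum_negf)

lemma ip_abs: "\<bar>ip d x y\<bar> \<le> nrm d x * nrm d y"
  using ip_le[of d x y] ip_le[of d "\<lambda>l. - x l" y] by (simp add: ip_neg_left nrm_neg)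

lemma small_t:
  fixes u v :: real
  assumes "\<And>t. 0 < t \<Longrightarrow> t \<le> 1 \<Longrightarrow> 0 \<le> u + t * v"
  shows "0 \<le> u"
proof (rule ccontr)
  assume "\<not> 0 \<le> u" hence u: "u < 0" by simp
  show False
  proof (cases "v \<le> 0")
    case True with assms[of 1] u show False by simp
  next
    case False
    define t where "t = min 1 (-u/(2*v))"
    have t0: "0 < t" using u False by (simp add: t_def field_simps)
    have t1: "t \<le> 1" by (simp add: t_def)
    have "t * v \<le> -u/(2*v) * v" using False by (intro mult_right_mono) (auto simp: t_def)
    also have "\<dots> = -u/2" using False by (simp add: field_simps)
    finally have "u + t*v < 0" using u by simp
    with assms[OF t0 t1] show False by simp
  qed
qed

lemma epoch:
  fixes n d :: nat and eta mu :: real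
  assumes n1: "n \<ge> 1" and eta: "eta > 0"
  and Svec: "S \<subseteq> vec d"
  and Sconv: "\<forall>x\<in>S. \<forall>y\<in>S. \<forall>t\<in>{0..1}. vcomb (1 - t) x t y \<in> S"
  and psiconv: "convex_fun_on S psi"
  and muc: "mu_condition d S psi mu"
  and sg: "\<forall>i\<in>{1..n}. \<forall>x\<in>vec d. gf i x \<in> subgrad d (vec d) (f i) x"
  and Gb: "\<forall>i\<in>{1..n}. \<forall>x\<in>vec d. nrm d (gf i x) \<le> G i"
  and bij: "bij_betw sigma {1..n} {1..n}"
  and a: "a \<in> S" and x1: "xin 1 = a"
  and step: "\<forall>i\<in>{1..n}. xin (Suc i) = vcomb 1 (xin i) (- eta) (gf (sigma i) (xin i))"
  and c: "c \<in> S"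
  and prox: "\<forall>y\<in>S. real n * psi c + 1 / (2 * eta) * (nrm d (vdiff c (xin (Suc n))))\<^sup>2
                 \<le> real n * psi y + 1 / (2 * eta) * (nrm d (vdiff y (xin (Suc n))))\<^sup>2"
  and y: "y \<in> S"
  shows "real n * eta * (((\<Sum>i=1..n. f i c) / real n + psi c) - ((\<Sum>i=1..n. f i y) / real n + psi y))
     \<le> (nrm d (vdiff a y))\<^sup>2 / 2 - (1 + real n * eta * mu) / 2 * (nrm d (vdiff c y))\<^sup>2
        + 4 * eta\<^sup>2 * (\<Sum>i=1..n. G i)\<^sup>2"
proof -
  define g where "g j = gf (sigma j) (xin j)" for j
  define z where "z = xin (Suc n)"
  define T where "T = (\<Sum>i=1..n. G i)"
  have sig: "sigma j \<in> {1..n}" if "j \<in> {1..n}" for j using bij that by (meson bij_betwE)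
  have avec: "a \<in> vec d" using a Svec by auto
  have cvec: "c \<in> vec d" using c Svec by auto
  have yvec: "y \<in> vec d" using y Svec by auto
  have inner: "xin (Suc i) \<in> vec d \<and> xin (Suc i) = (\<lambda>l. a l - eta * (\<Sum>j\<in>{1..<Suc i}. g j l))"
    if "i \<le> n" for i
    using that
  proof (induction i)
    case 0 then show ?case using x1 avec by simp
  next
    case (Suc i)
    then have IH: "xin (Suc i) \<in> vec d" "xin (Suc i) = (\<lambda>l. a l - eta * (\<Sum>j\<in>{1..<Suc i}. g j l))" by auto
    have si: "Suc i \<in> {1..n}" using Suc.prems by simp
    have gv: "g (Suc i) \<in> vec d" using sg sig[OF si] IH(1) unfolding g_def subgrad_def by blast
    have eq: "xin (Suc (Suc i)) = vcomb 1 (xin (Suc i)) (- eta) (g (Suc i))" using step si g_def by simp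
    show ?case
    proof
      show "xin (Suc (Suc i)) \<in> vec d" using eq IH(1) gv unfolding vcomb_def vec_def by simp
      show "xin (Suc (Suc i)) = (\<lambda>l. a l - eta * (\<Sum>j\<in>{1..<Suc (Suc i)}. g j l))"
        unfolding eq IH(2) vcomb_def by (auto simp: algebra_simps sum.atLeastLessThan_Suc fun_eq_iff)
    qed
  qed
  have xin_form: "xin j \<in> vec d \<and> vdiff a (xin j) = (\<lambda>l. eta * (\<Sum>k\<in>{1..<j}. g k l))"
    if jj: "j \<in> {1..Suc n}" for j
  proof -
    obtain i where j: "j = Suc i" "i \<le> n" using jj by (cases j) auto
    show ?thesis using inner[OF j(2)] unfolding j(1) vdiff_def by (auto simp: fun_eq_iff)
  qed
  have gfacts: "g j \<in> subgrad d (vec d) (f (sigma j)) (xin j) \<and> nrm d (g j) \<le> G (sigma j)"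
    if "j \<in> {1..n}" for j
    using sg Gb sig[OF that] xin_form[of j] that unfolding g_def by auto
  have Gnn: "G (sigma j) \<ge> 0" if "j \<in> {1..n}" for j
    using gfacts[OF that] nrm_nonneg[of d "g j"] by linarith
  have Gnn': "G i \<ge> 0" if ii: "i \<in> {1..n}" for i
  proof -
    have "i \<in> sigma ` {1..n}" using bij ii by (simp add: bij_betw_def)
    then obtain j where "j \<in> {1..n}" "sigma j = i" by blast
    thus ?thesis using Gnn by blast
  qed
  have Tsig: "T = (\<Sum>j=1..n. G (sigma j))"
    unfolding T_def by (rule sum.reindex_bij_betw[OF bij, symmetric])
  have T0: "T \<ge> 0" unfolding T_def by (rule sum_nonneg) (use Gnn' in auto)
  have dist: "nrm d (vdiff a (xin j)) \<le> eta * T" if "j \<in> {1..Suc n}" for j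
  proof -
    have "nrm d (vdiff a (xin j)) = eta * nrm d (\<lambda>l. \<Sum>k\<in>{1..<j}. g k l)"
      using xin_form[OF that] eta by (simp add: nrm_scale)
    also have "\<dots> \<le> eta * (\<Sum>k\<in>{1..<j}. nrm d (g k))"
      using eta by (intro mult_left_mono nrm_sum) auto
    also have "\<dots> \<le> eta * (\<Sum>k\<in>{1..<j}. G (sigma k))"
      using eta that gfacts by (intro mult_left_mono sum_mono) auto
    also have "\<dots> \<le> eta * (\<Sum>k\<in>{1..n}. G (sigma k))"
      using eta that Gnn by (intro mult_left_mono sum_mono2) auto
    finally show ?thesis using Tsig by simp
  qed
  have zv: "z \<in> vec d" using xin_form[of "Suc n"] z_def by simp
  have az: "nrm d (vdiff a z) \<le> eta * T" using dist[of "Suc n"] z_def by simp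
  have pp: "0 \<le> ip d (vdiff c z) (vdiff x c) / eta + real n * (psi x - psi c)" if x: "x \<in> S" for x
  proof (rule small_t[where v = "(nrm d (vdiff x c))\<^sup>2 / (2 * eta)"])
    fix t :: real assume t: "0 < t" "t \<le> 1"
    define yt where "yt = vcomb (1 - t) c t x"
    have ytS: "yt \<in> S" using Sconv c x t unfolding yt_def by auto
    have cv: "psi yt \<le> (1 - t) * psi c + t * psi x"
      using psiconv c x t unfolding convex_fun_on_def yt_def by auto
    have e: "vdiff yt z = (\<lambda>l. vdiff c z l + t * vdiff x c l)"
      by (simp add: yt_def vcomb_def vdiff_def algebra_simps fun_eq_iff)
    define IP where "IP = ip d (vdiff c z) (vdiff x c)"
    define N where "N = (nrm d (vdiff x c))\<^sup>2"
    define N0 where "N0 = (nrm d (vdiff c z))\<^sup>2"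
    have Ne: "(nrm d (vdiff yt z))\<^sup>2 = N0 + 2 * t * IP + t\<^sup>2 * N"
      unfolding nrm_sq e sq_expand IP_def N_def N0_def nrm_sq ..
    have "real n * psi c + 1 / (2 * eta) * N0 \<le> real n * psi yt + 1 / (2 * eta) * (nrm d (vdiff yt z))\<^sup>2"
      using prox ytS unfolding z_def N0_def by blast
    also have "\<dots> \<le> real n * ((1 - t) * psi c + t * psi x) + 1 / (2 * eta) * (N0 + 2 * t * IP + t\<^sup>2 * N)"
      using cv Ne by (simp add: mult_left_mono)
    finally have ineq: "real n * psi c + 1 / (2 * eta) * N0 \<le> real n * ((1 - t) * psi c + t * psi x) + 1 / (2 * eta) * (N0 + 2 * t * IP + t\<^sup>2 * N)" .
    have eq: "real n * ((1 - t) * psi c + t * psi x) + 1 / (2 * eta) * (N0 + 2 * t * IP + t\<^sup>2 * N)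
       - (real n * psi c + 1 / (2 * eta) * N0) = t * (IP / eta + real n * (psi x - psi c) + t * (N / (2 * eta)))"
      using eta by (simp add: field_simps power2_eq_square)
    have "0 \<le> t * (IP / eta + real n * (psi x - psi c) + t * (N / (2 * eta)))"
      using ineq eq by linarith
    hence "0 \<le> IP / eta + real n * (psi x - psi c) + t * (N / (2 * eta))"
      using t by (simp add: zero_le_mult_iff)
    thus "0 \<le> ip d (vdiff c z) (vdiff x c) / eta + real n * (psi x - psi c) + t * ((nrm d (vdiff x c))\<^sup>2 / (2 * eta))"
      unfolding IP_def N_def .
  qed
  define p where "p = (\<lambda>l. (-1 / (real n * eta)) * vdiff c z l)"
  have ipp: "ip d p w = - ip d (vdiff c z) w / (real n * eta)" for w
    unfolding p_def ip_scale_left by simp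
  have npos: "real n > 0" using n1 by simp
  have psub: "p \<in> subgrad d S psi c"
    unfolding subgrad_def
  proof (intro CollectI conjI ballI)
    show "c \<in> S" by (rule c)
    show "p \<in> vec d" using zv cvec unfolding p_def vec_def vdiff_def by simp
    fix x assume x: "x \<in> S"
    have "0 \<le> ip d (vdiff c z) (vdiff x c) / eta + real n * (psi x - psi c)" by (rule pp[OF x])
    hence "0 \<le> (ip d (vdiff c z) (vdiff x c) / eta + real n * (psi x - psi c)) / real n"
      using npos by simp
    also have "\<dots> = psi x - (psi c + ip d p (vdiff x c))"
      unfolding ipp using npos eta by (simp add: field_simps)
    finally show "psi c + ip d p (vdiff x c) \<le> psi x" by simp
  qed
  define IPy where "IPy = ip d (vdiff c z) (vdiff y c)"
  have mu0: "mu \<ge> 0" using muc unfolding mu_condition_def by simp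
  have "psi y - psi c - ip d p (vdiff y c) \<ge> mu / 2 * (nrm d (vdiff y c))\<^sup>2"
    using muc y psub unfolding mu_condition_def by blast
  hence psipart: "real n * eta * (psi c - psi y) \<le> IPy - real n * eta * mu / 2 * (nrm d (vdiff c y))\<^sup>2"
  proof -
    assume h: "psi y - psi c - ip d p (vdiff y c) \<ge> mu / 2 * (nrm d (vdiff y c))\<^sup>2"
    have h2: "psi c - psi y \<le> IPy / (real n * eta) - mu / 2 * (nrm d (vdiff c y))\<^sup>2"
      using h unfolding ipp IPy_def nrm_vdiff_sym[of d y c] by linarith
    have "real n * eta * (psi c - psi y) \<le> real n * eta * (IPy / (real n * eta) - mu / 2 * (nrm d (vdiff c y))\<^sup>2)"
      using h2 npos eta by (intro mult_left_mono) auto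
    also have "\<dots> = IPy - real n * eta * mu / 2 * (nrm d (vdiff c y))\<^sup>2"
      using npos eta by (simp add: field_simps)
    finally show ?thesis .
  qed
  define R where "R = nrm d (vdiff z c)"
  have fj: "f (sigma j) c - f (sigma j) y \<le> G (sigma j) * (3 * eta * T + R) + ip d (g j) (vdiff a y)"
    if j: "j \<in> {1..n}" for j
  proof -
    let ?s = "sigma j"
    have s: "?s \<in> {1..n}" using sig[OF j] .
    have xj: "xin j \<in> vec d" using xin_form[of j] j by simp
    have gc: "gf ?s c \<in> subgrad d (vec d) (f ?s) c" using sg s cvec by blast
    have h1: "f ?s c + ip d (gf ?s c) (vdiff (xin j) c) \<le> f ?s (xin j)"
      using gc xj unfolding subgrad_def by blast
    have h2: "- ip d (gf ?s c) (vdiff (xin j) c) \<le> G ?s * nrm d (vdiff (xin j) c)"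
    proof -
      have "- ip d (gf ?s c) (vdiff (xin j) c) \<le> nrm d (gf ?s c) * nrm d (vdiff (xin j) c)"
        using ip_abs[of d "gf ?s c" "vdiff (xin j) c"] by linarith
      also have "\<dots> \<le> G ?s * nrm d (vdiff (xin j) c)"
        using Gb s cvec by (intro mult_right_mono) (auto simp: nrm_nonneg)
      finally show ?thesis .
    qed
    have tri: "nrm d (vdiff (xin j) c) \<le> 2 * eta * T + R"
    proof -
      have e: "vdiff (xin j) c = (\<lambda>l. vdiff (xin j) a l + (vdiff a z l + vdiff z c l))"
        by (simp add: vdiff_def fun_eq_iff)
      have "nrm d (vdiff (xin j) c) \<le> nrm d (vdiff (xin j) a) + nrm d (\<lambda>l. vdiff a z l + vdiff z c l)"
        unfolding e by (rule nrm_add)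
      also have "\<dots> \<le> nrm d (vdiff (xin j) a) + (nrm d (vdiff a z) + nrm d (vdiff z c))"
        using nrm_add[of d "vdiff a z" "vdiff z c"] by simp
      also have "\<dots> \<le> eta * T + (eta * T + R)"
        using dist[of j] j az unfolding R_def nrm_vdiff_sym[of d "xin j" a] by (simp add: algebra_simps)
      finally show ?thesis by (simp add: algebra_simps)
    qed
    have gj: "g j \<in> subgrad d (vec d) (f ?s) (xin j)" "nrm d (g j) \<le> G ?s" using gfacts[OF j] by auto
    have h3: "f ?s (xin j) + ip d (g j) (vdiff y (xin j)) \<le> f ?s y"
      using gj(1) yvec unfolding subgrad_def by blast
    have h4: "- ip d (g j) (vdiff y (xin j)) = ip d (g j) (vdiff (xin j) a) + ip d (g j) (vdiff a y)"
      unfolding ip_diff_right by simp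
    have h5: "ip d (g j) (vdiff (xin j) a) \<le> G ?s * (eta * T)"
    proof -
      have "ip d (g j) (vdiff (xin j) a) \<le> nrm d (g j) * nrm d (vdiff (xin j) a)" by (rule ip_le)
      also have "\<dots> \<le> G ?s * (eta * T)"
        using gj(2) dist[of j] j unfolding nrm_vdiff_sym[of d "xin j" a]
        by (intro mult_mono) (auto simp: nrm_nonneg Gnn)
      finally show ?thesis .
    qed
    have h6: "G ?s * nrm d (vdiff (xin j) c) \<le> G ?s * (2 * eta * T + R)"
      using tri Gnn[OF j] by (rule mult_left_mono)
    have "f ?s c - f ?s y \<le> G ?s * (2 * eta * T + R) + G ?s * (eta * T) + ip d (g j) (vdiff a y)"
      using h1 h2 h3 h4 h5 h6 by linarith
    thus ?thesis by (simp add: algebra_simps)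
  qed
  have fsum: "(\<Sum>i=1..n. f i c) - (\<Sum>i=1..n. f i y) \<le> T * (3 * eta * T + R) + (\<Sum>j=1..n. ip d (g j) (vdiff a y))"
  proof -
    have "(\<Sum>i=1..n. f i c) - (\<Sum>i=1..n. f i y) = (\<Sum>j=1..n. f (sigma j) c - f (sigma j) y)"
      using sum.reindex_bij_betw[OF bij, of "\<lambda>i. f i c"] sum.reindex_bij_betw[OF bij, of "\<lambda>i. f i y"]
      by (simp add: sum_subtractf)
    also have "\<dots> \<le> (\<Sum>j=1..n. G (sigma j) * (3 * eta * T + R) + ip d (g j) (vdiff a y))"
      using fj by (intro sum_mono) auto
    also have "\<dots> = T * (3 * eta * T + R) + (\<Sum>j=1..n. ip d (g j) (vdiff a y))"
      unfolding Tsig by (simp add: sum.distrib sum_distrib_right)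
    finally show ?thesis .
  qed
  have IPa: "eta * (\<Sum>j=1..n. ip d (g j) (vdiff a y)) = ip d (vdiff a z) (vdiff a y)"
  proof -
    have "vdiff a z = (\<lambda>l. eta * (\<Sum>k\<in>{1..<Suc n}. g k l))" using xin_form[of "Suc n"] z_def by simp
    also have "{1..<Suc n} = {1..n}" by auto
    finally show ?thesis by (simp add: ip_scale_left ip_sum_left)
  qed
  have fp: "eta * ((\<Sum>i=1..n. f i c) - (\<Sum>i=1..n. f i y)) \<le> eta * T * (3 * eta * T + R) + ip d (vdiff a z) (vdiff a y)"
    using mult_left_mono[OF fsum, of eta] eta IPa by (simp add: algebra_simps)
  have split: "real n * eta * (((\<Sum>i=1..n. f i c) / real n + psi c) - ((\<Sum>i=1..n. f i y) / real n + psi y))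
     = eta * ((\<Sum>i=1..n. f i c) - (\<Sum>i=1..n. f i y)) + real n * eta * (psi c - psi y)"
    using npos by (simp add: field_simps)
  have fp4: "ip d (vdiff a z) (vdiff a y) + IPy = (nrm d (vdiff a y))\<^sup>2/2 - (nrm d (vdiff c y))\<^sup>2/2
     + (nrm d (vdiff a z))\<^sup>2/2 - R\<^sup>2/2"
    unfolding IPy_def R_def nrm_sq by (rule four_point)
  have q1: "eta * T * R - R\<^sup>2/2 \<le> (eta * T)\<^sup>2/2"
    using zero_le_power2[of "R - eta * T"] by (simp add: power2_eq_square algebra_simps)
  have q2: "(nrm d (vdiff a z))\<^sup>2 \<le> (eta * T)\<^sup>2"
    using az nrm_nonneg by (intro power_mono) auto
  have e1: "eta * T * (3 * eta * T + R) = 3 * (eta * T)\<^sup>2 + eta * T * R"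
    by (simp add: power2_eq_square algebra_simps)
  have e2: "4 * eta\<^sup>2 * (\<Sum>i=1..n. G i)\<^sup>2 = 4 * (eta * T)\<^sup>2"
    unfolding T_def by (simp add: power_mult_distrib)
  have e3: "(1 + real n * eta * mu) / 2 * (nrm d (vdiff c y))\<^sup>2 =
     (nrm d (vdiff c y))\<^sup>2 / 2 + real n * eta * mu / 2 * (nrm d (vdiff c y))\<^sup>2"
    by (simp add: field_simps)
  show ?thesis
    unfolding split e2 e3 using fp psipart fp4 q1 q2 e1 by linarith
qed


lemma telescope:
  fixes p e r Phi :: "nat \<Rightarrow> real" and m j K :: nat and mu phi :: real
  assumes rec: "\<And>k. p (Suc k) * (real k + 1) = p k * (real k + real m)"
  and ineq: "\<And>k. k \<in> {j..K} \<Longrightarrow> real m * (Phi (Suc k) - phi) \<le> mu * real k / 2 * r k - mu * (real k + real m) / 2 * r (Suc k) + e k"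
  and pos: "\<And>k. p k \<ge> 0"
  and jK: "j \<le> K"
  shows "(\<Sum>k=j..K. p k * (real m * (Phi (Suc k) - phi))) \<le> p j * (mu * real j / 2 * r j) - p K * (mu * (real K + real m) / 2 * r (Suc K)) + (\<Sum>k=j..K. p k * e k)"
  using jK ineq
proof (induction K rule: dec_induct)
  case base
  show ?case using mult_left_mono[OF base[of j] pos[of j]] by (simp add: algebra_simps)
next
  case (step q)
  have IH: "(\<Sum>k=j..q. p k * (real m * (Phi (Suc k) - phi))) \<le> p j * (mu * real j / 2 * r j) - p q * (mu * (real q + real m) / 2 * r (Suc q)) + (\<Sum>k=j..q. p k * e k)"
    using step.IH step.prems step.hyps by auto
  have i1: "real m * (Phi (Suc (Suc q)) - phi) \<le> mu * real (Suc q) / 2 * r (Suc q) - mu * (real (Suc q) + real m) / 2 * r (Suc (Suc q)) + e (Suc q)"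
    using step.prems[of "Suc q"] step.hyps(1) by simp
  have new: "p (Suc q) * (real m * (Phi (Suc (Suc q)) - phi)) \<le> p (Suc q) * (mu * real (Suc q) / 2 * r (Suc q)) - p (Suc q) * (mu * (real (Suc q) + real m) / 2 * r (Suc (Suc q))) + p (Suc q) * e (Suc q)"
    using mult_left_mono[OF i1 pos[of "Suc q"]] by (simp add: algebra_simps)
  have canc: "p (Suc q) * (mu * real (Suc q) / 2 * r (Suc q)) = p q * (mu * (real q + real m) / 2 * r (Suc q))"
  proof -
    have "p (Suc q) * (mu * real (Suc q) / 2 * r (Suc q)) = (p (Suc q) * (real q + 1)) * (mu / 2 * r (Suc q))"
      by (simp add: algebra_simps)
    also have "\<dots> = (p q * (real q + real m)) * (mu / 2 * r (Suc q))" by (simp add: rec)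
    finally show ?thesis by (simp add: algebra_simps)
  qed
  have s1: "(\<Sum>k=j..Suc q. p k * (real m * (Phi (Suc k) - phi))) = (\<Sum>k=j..q. p k * (real m * (Phi (Suc k) - phi))) + p (Suc q) * (real m * (Phi (Suc (Suc q)) - phi))"
    using step.hyps by simp
  have s2: "(\<Sum>k=j..Suc q. p k * e k) = (\<Sum>k=j..q. p k * e k) + p (Suc q) * e (Suc q)"
    using step.hyps by simp
  show ?case unfolding s1 s2 using IH new canc by linarith
qed

lemma harm_le: "K \<ge> 1 \<Longrightarrow> (\<Sum>k=1..K. 1 / real k) \<le> 1 + ln (real K)"
proof (induction K)
  case 0 then show ?case by simp
next
  case (Suc K)
  show ?case
  proof (cases "K = 0")
    case True then show ?thesis by simp
  next
    case False
    hence K1: "K \<ge> 1" by simp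
    have IH: "(\<Sum>k=1..K. 1 / real k) \<le> 1 + ln (real K)" using Suc.IH K1 by simp
    have "ln (real K / (real K + 1)) \<le> real K / (real K + 1) - 1"
      using K1 by (intro ln_le_minus_one) auto
    also have "\<dots> = - 1 / (real K + 1)" by (simp add: field_simps)
    finally have "ln (real K / (real K + 1)) \<le> - 1 / (real K + 1)" .
    moreover have "ln (real K / (real K + 1)) = ln (real K) - ln (real K + 1)"
      using K1 by (simp add: ln_div)
    ultimately have "1 / (real K + 1) \<le> ln (real K + 1) - ln (real K)" by simp
    thus ?thesis using IH by (simp add: add.commute)
  qed
qed

lemma ln2_half: "ln (2::real) \<ge> 1/2"
proof -
  have "ln (1/2::real) \<le> 1/2 - 1" by (intro ln_le_minus_one) auto
  moreover have "ln (1/2::real) = - ln 2" by (simp add: ln_div)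
  ultimately show ?thesis by simp
qed

lemma S_bound:
  assumes K1: "K \<ge> 2"
  shows "(\<Sum>k=1..K. 1 / (real k * (real K + 1 - real k))) \<le> 6 * ln (real K) / real K"
proof -
  define H where "H = (\<Sum>k=1..K. 1 / real k)"
  have t: "1 / (real k * (real K + 1 - real k)) = (1 / real k + 1 / (real K + 1 - real k)) / (real K + 1)"
    if kk: "k \<in> {1..K}" for k
  proof -
    have a1: "real k > 0" using kk by auto
    have a2: "real K + 1 - real k > 0" using kk by auto
    have gen: "1 / (x * y) = (1 / x + 1 / y) / (x + y)" if "x > 0" "y > 0" for x y :: real
    proof -
      have s: "x + y > 0" using that by simp
      have "1 / x + 1 / y = (x + y) / (x * y)" using that by (simp add: field_simps)
      thus ?thesis using s by simp
    qed
    show ?thesis using gen[OF a1 a2] by simp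
  qed
  have rev: "(\<Sum>k=1..K. 1 / (real K + 1 - real k)) = H"
  proof -
    have "H = (\<Sum>k=1..K. 1 / real (K + 1 - k))"
      unfolding H_def by (rule sum.atLeastAtMost_rev)
    also have "\<dots> = (\<Sum>k=1..K. 1 / (real K + 1 - real k))"
      by (intro sum.cong) (auto simp: of_nat_diff)
    finally show ?thesis by simp
  qed
  have "(\<Sum>k=1..K. 1 / (real k * (real K + 1 - real k))) = (\<Sum>k=1..K. (1 / real k + 1 / (real K + 1 - real k)) / (real K + 1))"
    using t by (intro sum.cong) auto
  also have "\<dots> = 2 * H / (real K + 1)"
    unfolding sum_divide_distrib[symmetric] sum.distrib rev H_def by simp
  finally have S: "(\<Sum>k=1..K. 1 / (real k * (real K + 1 - real k))) = 2 * H / (real K + 1)" .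
  have lnK: "ln (real K) \<ge> 1/2"
  proof -
    have "ln (2::real) \<le> ln (real K)" using K1 by simp
    thus ?thesis using ln2_half by simp
  qed
  have H: "H \<le> 3 * ln (real K)" using harm_le[of K] K1 lnK unfolding H_def by simp
  have H0: "H \<ge> 0" unfolding H_def by (simp add: sum_nonneg)
  have "2 * H / (real K + 1) \<le> 2 * H / real K"
    using H0 K1 by (intro divide_left_mono) auto
  also have "\<dots> \<le> 2 * (3 * ln (real K)) / real K"
    using H K1 by (intro divide_right_mono) auto
  finally show ?thesis unfolding S by simp
qed



lemma lastiter:
  fixes h p :: "nat \<Rightarrow> real" and K :: nat and B c :: real
  assumes K2: "K \<ge> 2" and ppos: "\<And>k. p k > 0" and pmono: "\<And>k. p k \<le> p (Suc k)" and c0: "c \<ge> 0"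
  and X: "(\<Sum>k=1..K. p k * h (Suc k)) \<le> B + c * (\<Sum>k=1..K. p k / real k)"
  and J: "\<And>j. j \<in> {2..K} \<Longrightarrow> (\<Sum>k=j..K. p k * (h (Suc k) - h j)) \<le> c * (\<Sum>k=j..K. p k / real k)"
  shows "h (Suc K) \<le> B / (\<Sum>k=1..K. p k) + 12 * c * ln (real K) / real K"
proof -
  define P where "P j = (\<Sum>k=j..K. p k)" for j
  define A where "A j = (\<Sum>k=j..K. p k * h (Suc k))" for j
  define Q where "Q j = c * (\<Sum>k=j..K. p k / real k)" for j
  define S where "S = (\<Sum>k=1..K. 1 / (real k * (real K + 1 - real k)))"
  have Ppos: "P j > 0" if "j \<le> K" for j
    unfolding P_def using ppos that by (intro sum_pos) auto
  have P0: "P j \<ge> 0" for j unfolding P_def using ppos by (intro sum_nonneg) (auto intro: less_imp_le)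
  have Psplit: "P j = p j + P (Suc j)" if "j \<le> K" for j
    unfolding P_def using that by (rule sum.atLeast_Suc_atMost)
  have Asplit: "A j = p j * h (Suc j) + A (Suc j)" if "j \<le> K" for j
    unfolding A_def using that by (rule sum.atLeast_Suc_atMost)
  have Jr: "A j - P j * h j \<le> Q j" if "j \<in> {2..K}" for j
  proof -
    have "(\<Sum>k=j..K. p k * (h (Suc k) - h j)) = A j - P j * h j"
      unfolding A_def P_def by (simp add: right_diff_distrib sum_subtractf sum_distrib_right)
    thus ?thesis using J[OF that] unfolding Q_def by simp
  qed
  have stepA: "A (Suc j) / P (Suc j) \<le> A j / P j + p j * Q (Suc j) / (P j * P (Suc j))"
    if j: "1 \<le> j" "j < K" for j
  proof -
    have sj: "Suc j \<in> {2..K}" using j by auto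
    have P1: "P j > 0" and P2: "P (Suc j) > 0" using Ppos j by auto
    have pj: "p j > 0" by (rule ppos)
    have jr: "A (Suc j) - Q (Suc j) \<le> P (Suc j) * h (Suc j)" using Jr[OF sj] by simp
    have "p j * (A (Suc j) - Q (Suc j)) \<le> p j * (P (Suc j) * h (Suc j))"
      using jr pj by (intro mult_left_mono) auto
    hence h: "p j * A (Suc j) \<le> p j * Q (Suc j) + p j * (P (Suc j) * h (Suc j))" by (simp add: algebra_simps)
    have e1: "P j = p j + P (Suc j)" using Psplit[of j] j by simp
    have e2: "A j = p j * h (Suc j) + A (Suc j)" using Asplit[of j] j by simp
    have e3: "A (Suc j) * (p j + P (Suc j)) = p j * A (Suc j) + A (Suc j) * P (Suc j)" by (simp add: algebra_simps)
    have e4: "(p j * h (Suc j) + A (Suc j)) * P (Suc j) = p j * (P (Suc j) * h (Suc j)) + A (Suc j) * P (Suc j)" by (simp add: algebra_simps)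
    have key: "A (Suc j) * P j \<le> A j * P (Suc j) + p j * Q (Suc j)"
      unfolding e1 e2 e3 e4 using h by linarith
    have "A (Suc j) / P (Suc j) = (A (Suc j) * P j) / (P j * P (Suc j))"
      using P1 P2 by (simp add: field_simps)
    also have "\<dots> \<le> (A j * P (Suc j) + p j * Q (Suc j)) / (P j * P (Suc j))"
      using key P1 P2 by (intro divide_right_mono) auto
    also have "\<dots> = A j / P j + p j * Q (Suc j) / (P j * P (Suc j))"
      using P1 P2 by (simp add: field_simps)
    finally show ?thesis .
  qed
  have chain: "A j / P j \<le> A 1 / P 1 + (\<Sum>i=1..<j. p i * Q (Suc i) / (P i * P (Suc i)))"
    if "1 \<le> j" "j \<le> K" for j
    using that
  proof (induction j rule: dec_induct)
    case base then show ?case by simp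
  next
    case (step q)
    have "A (Suc q) / P (Suc q) \<le> A q / P q + p q * Q (Suc q) / (P q * P (Suc q))"
      using stepA[of q] step.hyps step.prems by auto
    also have "\<dots> \<le> A 1 / P 1 + (\<Sum>i=1..<q. p i * Q (Suc i) / (P i * P (Suc i))) + p q * Q (Suc q) / (P q * P (Suc q))"
      using step.IH step.prems step.hyps by auto
    also have "\<dots> = A 1 / P 1 + (\<Sum>i=1..<Suc q. p i * Q (Suc i) / (P i * P (Suc i)))"
      using step.hyps by simp
    finally show ?case .
  qed
  have hK: "h (Suc K) = A K / P K"
  proof -
    have "A K = p K * h (Suc K)" "P K = p K" unfolding A_def P_def by auto
    thus ?thesis using ppos[of K] by simp
  qed
  have pmono': "p i \<le> p k" if "i \<le> k" for i k using lift_Suc_mono_le[of p, OF pmono that] .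
  have Plow: "(real K + 1 - real j) * p j \<le> P j" if "1 \<le> j" "j \<le> K" for j
  proof -
    have "(\<Sum>k=j..K. p j) \<le> P j" unfolding P_def using pmono' by (intro sum_mono) auto
    moreover have "(\<Sum>k=j..K. p j) = real (Suc K - j) * p j" by simp
    moreover have "real (Suc K - j) = real K + 1 - real j" using that by (simp add: of_nat_diff)
    ultimately show ?thesis by simp
  qed
  have Ple: "P j \<le> P 1" if "1 \<le> j" for j
    unfolding P_def using that ppos by (intro sum_mono2) (auto intro: less_imp_le)
  have S0: "0 \<le> 1 / (real k * (real K + 1 - real k))" if "k \<in> {1..K}" for k
    using that by auto
  have Q1: "Q 1 / P 1 \<le> c * S"
  proof -
    have "p k / real k \<le> P 1 * (1 / (real k * (real K + 1 - real k)))" if k: "k \<in> {1..K}" for k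
    proof -
      have a: "real K + 1 - real k > 0" "real k > 0" using k by auto
      have "(real K + 1 - real k) * p k \<le> P 1" using Plow[of k] Ple[of k] k by auto
      hence "p k \<le> P 1 / (real K + 1 - real k)" using a by (simp add: field_simps)
      hence "p k / real k \<le> P 1 / (real K + 1 - real k) / real k" using a by (intro divide_right_mono) auto
      thus ?thesis by (simp add: field_simps)
    qed
    hence "(\<Sum>k=1..K. p k / real k) \<le> P 1 * S" unfolding S_def sum_distrib_left by (intro sum_mono) auto
    hence "Q 1 \<le> c * (P 1 * S)" unfolding Q_def using c0 by (intro mult_left_mono) auto
    thus ?thesis using Ppos[of 1] K2 by (simp add: field_simps)
  qed
  have Qi: "p i * Q (Suc i) / (P i * P (Suc i)) \<le> c * (1 / (real i * (real K + 1 - real i)))"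
    if i: "1 \<le> i" "i < K" for i
  proof -
    have P1: "P i > 0" and P2: "P (Suc i) > 0" using Ppos i by auto
    have ai: "real i > 0" "real K + 1 - real i > 0" using i by auto
    have "(\<Sum>k=Suc i..K. p k / real k) \<le> (\<Sum>k=Suc i..K. p k / real i)"
      using ppos ai by (intro sum_mono divide_left_mono) (auto intro: less_imp_le)
    also have "\<dots> = P (Suc i) / real i" unfolding P_def by (simp add: sum_divide_distrib)
    finally have "Q (Suc i) \<le> c * (P (Suc i) / real i)" unfolding Q_def using c0 by (intro mult_left_mono) auto
    hence "p i * Q (Suc i) / (P i * P (Suc i)) \<le> p i * (c * (P (Suc i) / real i)) / (P i * P (Suc i))"
      using P1 P2 ppos[of i] by (intro divide_right_mono mult_left_mono) auto
    also have "\<dots> = c * (p i / (real i * P i))" using P1 P2 ai by (simp add: field_simps)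
    also have "\<dots> \<le> c * (1 / (real i * (real K + 1 - real i)))"
    proof -
      have "(real K + 1 - real i) * p i \<le> P i" using Plow[of i] i by auto
      have gen: "u / (x * w) \<le> 1 / (x * b)" if "b * u \<le> w" "x > 0" "b > 0" "w > 0" for u x w b :: real
      proof -
        have "u \<le> w / b" using that by (simp add: pos_le_divide_eq mult.commute)
        hence "u / (x * w) \<le> (w / b) / (x * w)" using that by (intro divide_right_mono) auto
        also have "\<dots> = 1 / (x * b)" using that by simp
        finally show ?thesis .
      qed
      hence "p i / (real i * P i) \<le> 1 / (real i * (real K + 1 - real i))"
        using ai P1 \<open>(real K + 1 - real i) * p i \<le> P i\<close> by (intro gen) auto
      thus ?thesis using c0 by (intro mult_left_mono) auto
    qed
    finally show ?thesis .
  qed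
  have sumQ: "(\<Sum>i=1..<K. p i * Q (Suc i) / (P i * P (Suc i))) \<le> c * S"
  proof -
    have "(\<Sum>i=1..<K. p i * Q (Suc i) / (P i * P (Suc i))) \<le> (\<Sum>i=1..<K. c * (1 / (real i * (real K + 1 - real i))))"
      using Qi by (intro sum_mono) auto
    also have "\<dots> \<le> (\<Sum>i=1..K. c * (1 / (real i * (real K + 1 - real i))))"
      using S0 c0 by (intro sum_mono2) auto
    also have "\<dots> = c * S" unfolding S_def by (simp add: sum_distrib_left)
    finally show ?thesis .
  qed
  have A1: "A 1 / P 1 \<le> B / P 1 + Q 1 / P 1"
    using X Ppos[of 1] K2 unfolding A_def Q_def P_def by (simp add: divide_right_mono add_divide_distrib[symmetric])
  have "h (Suc K) \<le> B / P 1 + c * S + c * S"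
  proof -
    have ch: "A K / P K \<le> A 1 / P 1 + (\<Sum>i=1..<K. p i * Q (Suc i) / (P i * P (Suc i)))"
      using chain[of K] K2 by simp
    show ?thesis using ch hK A1 Q1 sumQ by linarith
  qed
  also have "\<dots> \<le> B / P 1 + 12 * c * ln (real K) / real K"
    using S_bound[OF K2] c0 mult_left_mono[OF S_bound[OF K2] c0] unfolding S_def by simp
  finally show ?thesis unfolding P_def .
qed



lemma main:
  fixes d n m K :: nat and mu :: real and F :: "(nat \<Rightarrow> real) \<Rightarrow> real" and eta :: "nat \<Rightarrow> real"
  assumes H: "d \<ge> 1 \<and> n \<ge> 1 \<and> m \<ge> 1 \<and> K \<ge> 2 \<and>
     (\<forall>i\<in>{1..n}. convex_fun_on (vec d) (f i)) \<and>
     (\<forall>i\<in>{1..n}. \<forall>x\<in>vec d. gf i x \<in> subgrad d (vec d) (f i) x) \<and>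
     (\<forall>i\<in>{1..n}. G i > 0 \<and> (\<forall>x\<in>vec d. \<forall>g\<in>subgrad d (vec d) (f i) x. nrm d g \<le> G i)) \<and>
     proper_closed_convex d S psi \<and>
     mu_condition d S psi mu \<and> mu > 0 \<and>
     xstar \<in> S \<and> (\<forall>x\<in>S. F xstar \<le> F x) \<and>
     prox_shuffling_run d n gf S psi K eta sigma xs xin"
  and F_def: "F = (\<lambda>x. (\<Sum>i=1..n. f i x) / real n + psi x)"
  and eta_def: "eta = (\<lambda>k. real m / (real n * mu * real k))"
  and Gbar_def: "Gbar = (\<Sum>i=1..n. G i) / real n"
  and D_def: "D = nrm d (vdiff xstar (xs 1))"
  shows "F (xs (Suc K)) - F xstar
           \<le> 48 * (mu * D\<^sup>2 / real ((K + m) choose m) + Gbar\<^sup>2 * real m * ln (real K) / (mu * real K))"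
proof -
  from H have n1: "n \<ge> 1" and m1: "m \<ge> 1" and K2: "K \<ge> 2"
    and sg: "\<forall>i\<in>{1..n}. \<forall>x\<in>vec d. gf i x \<in> subgrad d (vec d) (f i) x"
    and Gh: "\<forall>i\<in>{1..n}. G i > 0 \<and> (\<forall>x\<in>vec d. \<forall>g\<in>subgrad d (vec d) (f i) x. nrm d g \<le> G i)"
    and pcc: "proper_closed_convex d S psi" and muc: "mu_condition d S psi mu" and mu: "mu > 0"
    and xs_in: "xstar \<in> S" and run: "prox_shuffling_run d n gf S psi K eta sigma xs xin"
    by auto
  have Svec: "S \<subseteq> vec d" and Sconv: "\<forall>x\<in>S. \<forall>y\<in>S. \<forall>t\<in>{0..1}. vcomb (1 - t) x t y \<in> S"
    and psiconv: "convex_fun_on S psi"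
    using pcc unfolding proper_closed_convex_def convex_set_def by auto
  have Gb: "\<forall>i\<in>{1..n}. \<forall>x\<in>vec d. nrm d (gf i x) \<le> G i" using sg Gh by blast
  have xsS: "xs k \<in> S" if "k \<in> {1..Suc K}" for k
  proof (cases k)
    case 0 then show ?thesis using that by simp
  next
    case (Suc k')
    show ?thesis
    proof (cases k')
      case 0 then show ?thesis using run Suc unfolding prox_shuffling_run_def by simp
    next
      case (Suc k'')
      then show ?thesis using run \<open>k = Suc k'\<close> that unfolding prox_shuffling_run_def by auto
    qed
  qed
  define T where "T = (\<Sum>i=1..n. G i)"
  define c where "c = 4 * real m * Gbar\<^sup>2 / mu"
  define r where "r = (\<lambda>y k. (nrm d (vdiff (xs k) y))\<^sup>2)"
  have npos: "real n > 0" using n1 by simp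
  have mpos: "real m > 0" using m1 by simp
  have TG: "T = real n * Gbar" unfolding T_def Gbar_def using npos by simp
  have epk: "real m * (F (xs (Suc k)) - F y) \<le> mu * real k / 2 * r y k - mu * (real k + real m) / 2 * r y (Suc k) + real m * c / real k"
    if k: "k \<in> {1..K}" and y: "y \<in> S" for k y
  proof -
    have kpos: "real k > 0" using k by auto
    have etapos: "eta k > 0" unfolding eta_def using npos mpos mu kpos by simp
    have rk: "bij_betw (sigma k) {1..n} {1..n} \<and> xin k 1 = xs k \<and>
        (\<forall>i\<in>{1..n}. xin k (Suc i) = vcomb 1 (xin k i) (- eta k) (gf (sigma k i) (xin k i))) \<and>
        xs (Suc k) \<in> S \<and>
        (\<forall>y\<in>S. real n * psi (xs (Suc k)) + 1 / (2 * eta k) * (nrm d (vdiff (xs (Suc k)) (xin k (Suc n))))\<^sup>2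
                 \<le> real n * psi y + 1 / (2 * eta k) * (nrm d (vdiff y (xin k (Suc n))))\<^sup>2)"
      using run k unfolding prox_shuffling_run_def by blast
    have a: "xs k \<in> S" using xsS k by auto
    have E: "real n * eta k * (F (xs (Suc k)) - F y)
       \<le> (nrm d (vdiff (xs k) y))\<^sup>2 / 2 - (1 + real n * eta k * mu) / 2 * (nrm d (vdiff (xs (Suc k)) y))\<^sup>2
          + 4 * (eta k)\<^sup>2 * T\<^sup>2"
      unfolding F_def T_def
      using epoch[OF n1 etapos Svec Sconv psiconv muc sg Gb _ a _ _ _ _ y, of "sigma k" "xin k" "xs (Suc k)"] rk
      by auto
    have ne: "real n * eta k * (mu * real k) = real m"
      unfolding eta_def using npos mu kpos by (simp add: field_simps)
    have "mu * real k * (real n * eta k * (F (xs (Suc k)) - F y))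
       \<le> mu * real k * ((nrm d (vdiff (xs k) y))\<^sup>2 / 2 - (1 + real n * eta k * mu) / 2 * (nrm d (vdiff (xs (Suc k)) y))\<^sup>2
          + 4 * (eta k)\<^sup>2 * T\<^sup>2)"
      using E mu kpos by (intro mult_left_mono) auto
    also have "\<dots> = mu * real k / 2 * r y k - mu * (real k + real m) / 2 * r y (Suc k) + real m * c / real k"
      unfolding r_def c_def eta_def TG using npos mu kpos by (simp add: field_simps power2_eq_square)
    finally have I: "mu * real k * (real n * eta k * (F (xs (Suc k)) - F y)) \<le> mu * real k / 2 * r y k - mu * (real k + real m) / 2 * r y (Suc k) + real m * c / real k" .
    have L: "mu * real k * (real n * eta k * (F (xs (Suc k)) - F y)) = real m * (F (xs (Suc k)) - F y)"
    proof -
      have "mu * real k * (real n * eta k * (F (xs (Suc k)) - F y)) = (real n * eta k * (mu * real k)) * (F (xs (Suc k)) - F y)"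
        by (simp only: mult_ac)
      thus ?thesis using ne by simp
    qed
    show ?thesis using I L by linarith
  qed
  define p where "p k = real ((k + (m - 1)) choose k)" for k
  have rec: "p (Suc k) * (real k + 1) = p k * (real k + real m)" for k
  proof -
    have "Suc (k + (m-1)) * ((k + (m-1)) choose k) = (Suc (k + (m-1)) choose Suc k) * Suc k"
      by (rule Suc_times_binomial_eq)
    moreover have "Suc (k + (m-1)) = k + m" using m1 by simp
    moreover have "Suc k + (m - 1) = Suc (k + (m-1))" by simp
    ultimately have "(k + m) * ((k + (m-1)) choose k) = ((Suc k + (m-1)) choose Suc k) * Suc k" by simp
    hence "real ((k + m) * ((k + (m-1)) choose k)) = real (((Suc k + (m-1)) choose Suc k) * Suc k)" by (simp only:)
    thus ?thesis unfolding p_def by (simp add: algebra_simps)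
  qed
  have ppos: "p k > 0" for k unfolding p_def by simp
  have pmono: "p k \<le> p (Suc k)" for k
  proof -
    have "p k * (real k + 1) \<le> p k * (real k + real m)" using ppos[of k] m1 by (intro mult_left_mono) auto
    hence "p k * (real k + 1) \<le> p (Suc k) * (real k + 1)" using rec[of k] by simp
    moreover have "real k + 1 > 0" by simp
    ultimately show ?thesis using mult_le_cancel_right_pos by blast
  qed
  have p1: "p 1 = real m" unfolding p_def using m1 by simp
  define bb where "bb = real ((K + m) choose m)"
  have Psum: "(\<Sum>k=1..K. p k) = bb - 1"
  proof -
    have e1: "(\<Sum>k\<le>K. ((m-1) + k) choose k) = Suc ((m-1) + K) choose K" by (rule sum_choose_lower)
    have "{..K} = insert 0 {1..K}" by auto
    hence e2: "(\<Sum>k\<le>K. ((m-1) + k) choose k) = 1 + (\<Sum>k=1..K. ((m-1) + k) choose k)" by simp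
    have e3: "Suc ((m-1) + K) = K + m" using m1 by simp
    have e4: "(K + m) choose K = (K + m) choose m" using binomial_symmetric[of K "K + m"] by simp
    have e5: "m + K = K + m" by simp
    have "(\<Sum>k=1..K. ((m-1) + k) choose k) = ((K + m) choose m) - 1" using e1 e2 e3 e4 e5 by simp
    moreover have "((K + m) choose m) \<ge> 1" using e1 e2 e3 e4 e5 by simp
    ultimately have "real (\<Sum>k=1..K. ((m-1) + k) choose k) = bb - 1" unfolding bb_def by (simp add: of_nat_diff)
    thus ?thesis unfolding p_def by (simp add: add.commute)
  qed
  have c0: "c \<ge> 0" unfolding c_def using mu by simp
  have tel: "(\<Sum>k=j..K. p k * (F (xs (Suc k)) - F y)) \<le> (p j * (mu * real j / 2 * r y j)) / real m + c * (\<Sum>k=j..K. p k / real k)"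
    if j: "1 \<le> j" "j \<le> K" and y: "y \<in> S" for j y
  proof -
    have T0: "(\<Sum>k=j..K. p k * (real m * ((\<lambda>k. F (xs k)) (Suc k) - F y))) \<le> p j * (mu * real j / 2 * r y j) - p K * (mu * (real K + real m) / 2 * r y (Suc K)) + (\<Sum>k=j..K. p k * (real m * c / real k))"
      by (rule telescope[where r = "r y" and e = "\<lambda>k. real m * c / real k"])
         (use rec epk j y ppos in \<open>auto intro: less_imp_le\<close>)
    have nn: "p K * (mu * (real K + real m) / 2 * r y (Suc K)) \<ge> 0"
      using ppos[of K] mu unfolding r_def by (intro mult_nonneg_nonneg) auto
    have s1: "(\<Sum>k=j..K. p k * (real m * ((\<lambda>k. F (xs k)) (Suc k) - F y))) = real m * (\<Sum>k=j..K. p k * (F (xs (Suc k)) - F y))"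
      by (simp add: sum_distrib_left algebra_simps)
    have s2: "(\<Sum>k=j..K. p k * (real m * c / real k)) = real m * (c * (\<Sum>k=j..K. p k / real k))"
      by (simp add: sum_distrib_left algebra_simps)
    have "real m * (\<Sum>k=j..K. p k * (F (xs (Suc k)) - F y)) \<le> p j * (mu * real j / 2 * r y j) + real m * (c * (\<Sum>k=j..K. p k / real k))"
      using T0 nn unfolding s1 s2 by linarith
    hence "(\<Sum>k=j..K. p k * (F (xs (Suc k)) - F y)) \<le> (p j * (mu * real j / 2 * r y j) + real m * (c * (\<Sum>k=j..K. p k / real k))) / real m"
      using mpos by (simp add: pos_le_divide_eq mult.commute)
    thus ?thesis using mpos by (simp add: add_divide_distrib)
  qed
  define h where "h k = F (xs k) - F xstar" for k
  have r1: "r xstar 1 = D\<^sup>2" unfolding r_def D_def using nrm_vdiff_sym by simp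
  have X: "(\<Sum>k=1..K. p k * h (Suc k)) \<le> mu / 2 * D\<^sup>2 + c * (\<Sum>k=1..K. p k / real k)"
    using tel[of 1 xstar] K2 xs_in p1 r1 mpos unfolding h_def by simp
  have J: "(\<Sum>k=j..K. p k * (h (Suc k) - h j)) \<le> c * (\<Sum>k=j..K. p k / real k)" if j: "j \<in> {2..K}" for j
  proof -
    have y: "xs j \<in> S" using xsS j by auto
    have r0: "r (xs j) j = 0" unfolding r_def by (simp add: vdiff_def nrm_def ip_def)
    show ?thesis using tel[of j "xs j"] j y r0 unfolding h_def by simp
  qed
  have LI: "h (Suc K) \<le> mu / 2 * D\<^sup>2 / (\<Sum>k=1..K. p k) + 12 * c * ln (real K) / real K"
    by (rule lastiter[OF K2 ppos pmono c0 X J])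
  have pge: "p 1 \<le> (\<Sum>k=1..K. p k)" using K2 ppos by (intro member_le_sum) (auto intro: less_imp_le)
  have bb2: "bb \<ge> 2" using pge Psum p1 m1 by simp
  have D0: "mu * D\<^sup>2 \<ge> 0" using mu by simp
  have t1: "mu / 2 * D\<^sup>2 / (\<Sum>k=1..K. p k) \<le> mu * D\<^sup>2 / bb"
  proof -
    have "mu / 2 * D\<^sup>2 / (\<Sum>k=1..K. p k) = mu * D\<^sup>2 / (2 * (bb - 1))" unfolding Psum by simp
    also have "\<dots> \<le> mu * D\<^sup>2 / bb" using bb2 D0 by (intro divide_left_mono) auto
    finally show ?thesis .
  qed
  have t2: "12 * c * ln (real K) / real K = 48 * (Gbar\<^sup>2 * real m * ln (real K) / (mu * real K))"
    unfolding c_def using mu K2 by (simp add: field_simps)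
  have t3: "mu * D\<^sup>2 / bb \<ge> 0" using D0 bb2 by simp
  have t4: "48 * (mu * D\<^sup>2 / bb + Gbar\<^sup>2 * real m * ln (real K) / (mu * real K)) = 48 * (mu * D\<^sup>2 / bb) + 48 * (Gbar\<^sup>2 * real m * ln (real K) / (mu * real K))"
    by (rule distrib_left)
  have gen: "x \<le> u + v \<Longrightarrow> u \<le> a \<Longrightarrow> v = 48 * b \<Longrightarrow> 0 \<le> a \<Longrightarrow> x \<le> 48 * (a + b)" for x u v a b :: real
    unfolding distrib_left by linarith
  show ?thesis unfolding bb_def[symmetric] using gen[OF LI[unfolded h_def] t1 t2 t3] .
qed
theorem theorem4p5:
  shows "\<exists>C::real. C > 0 \<and>
    (\<forall>(d::nat) (n::nat) (f :: nat \<Rightarrow> (nat \<Rightarrow> real) \<Rightarrow> real)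
       (gf :: nat \<Rightarrow> (nat \<Rightarrow> real) \<Rightarrow> (nat \<Rightarrow> real)) (G :: nat \<Rightarrow> real)
       (S :: (nat \<Rightarrow> real) set) (psi :: (nat \<Rightarrow> real) \<Rightarrow> real) (mu::real)
       (m::nat) (K::nat) (sigma :: nat \<Rightarrow> nat \<Rightarrow> nat)
       (xs :: nat \<Rightarrow> (nat \<Rightarrow> real)) (xin :: nat \<Rightarrow> nat \<Rightarrow> (nat \<Rightarrow> real))
       (xstar :: nat \<Rightarrow> real).
     let F = (\<lambda>x. (\<Sum>i=1..n. f i x) / real n + psi x);
         eta = (\<lambda>k. real m / (real n * mu * real k));
         Gbar = (\<Sum>i=1..n. G i) / real n;
         D = nrm d (vdiff xstar (xs 1))
     in
     d \<ge> 1 \<and> n \<ge> 1 \<and> m \<ge> 1 \<and> K \<ge> 2 \<and>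
     (\<forall>i\<in>{1..n}. convex_fun_on (vec d) (f i)) \<and>
     (\<forall>i\<in>{1..n}. \<forall>x\<in>vec d. gf i x \<in> subgrad d (vec d) (f i) x) \<and>
     (\<forall>i\<in>{1..n}. G i > 0 \<and> (\<forall>x\<in>vec d. \<forall>g\<in>subgrad d (vec d) (f i) x. nrm d g \<le> G i)) \<and>
     proper_closed_convex d S psi \<and>
     mu_condition d S psi mu \<and> mu > 0 \<and>
     xstar \<in> S \<and> (\<forall>x\<in>S. F xstar \<le> F x) \<and>
     prox_shuffling_run d n gf S psi K eta sigma xs xin
     \<longrightarrow> F (xs (Suc K)) - F xstar
           \<le> C * (mu * D\<^sup>2 / real ((K + m) choose m) + Gbar\<^sup>2 * real m * ln (real K) / (mu * real K)))"
  apply (rule exI[of _ 48])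
  apply (intro conjI allI)
   apply simp
  apply (unfold Let_def)
  apply (intro impI)
  apply (rule main[OF _ refl refl refl refl])
  apply assumption
  done

end
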